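(* Let $\mathbb{A}$ be a 2-category and $p:e\to b$ a 1-cell such that $\mathbb{A}$ has the two-dimensional cokernel diagram of $p$ and a right Kan extension $(t,\gamma)$ of $p$ along $p$ exists. Let $\ell:b\uparrow_pb\to b$ be the unique 1-cell with $\ell\delta^0=\mathrm{id}_b$, $\ell\delta^1=t$ and $\mathrm{id}_\ell\ast\alpha=\gamma$. Then $(t,\gamma)$ is preserved by $\delta^0:b\to b\uparrow_pb$ if and only if $\ell$ is left adjoint to $\delta^0$. In this case there is an adjunction $\ell\dashv\delta^0$ whose counit is the identity 2-cell $\mathrm{id}_{\mathrm{id}_b}:\ell\delta^0\Rightarrow\mathrm{id}_b$.
   Context: A 2-category is a $\mathbf{Cat}$-enriched category; composition of 1-cells is juxtaposition, vertical composition of 2-cells is $\cdot$, horizontal composition is $\ast$, $\mathrm{id}_f$ is the identity 2-cell on $f$. Opcomma object of $p$ along itself: an object $b\uparrow_p b$ with 1-cells $\delta^0,\delta^1:b\to b\uparrow_p b$ and a 2-cell $\alpha:\delta^1p\Rightarrow\delta^0p$ such that for every object $y$ the functor $h\mapsto(h\delta^0,h\delta^1,\mathrm{id}_h\ast\alpha)$, $\xi\mapsto(\xi\ast\mathrm{id}_{\delta^0},\xi\ast\mathrm{id}_{\delta^1})$ is an isomorphism from $\mathbb{A}(b\uparrow_p b,y)$ onto the category of triples $(h_0,h_1:b\to y,\ \beta:h_1p\Rightarrow h_0p)$ with morphisms pairs of 2-cells $(\xi_0:h_0\Rightarrow h_0',\xi_1:h_1\Rightarrow h_1')$ satisfying $(\xi_0\ast\mathrm{id}_p)\cdot\beta=\beta'\cdot(\xi_1\ast\mathrm{id}_p)$.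 Two-dimensional pushout of a span $f_0:c\to c_0$, $f_1:c\to c_1$: an object $P$ with $q_0:c_0\to P$, $q_1:c_1\to P$, $q_0f_0=q_1f_1$, such that for every $y$, $k\mapsto(kq_0,kq_1)$ is an isomorphism from $\mathbb{A}(P,y)$ onto the category of pairs $(k_0,k_1)$ with $k_0f_0=k_1f_1$, whose morphisms are pairs of 2-cells $(\xi_0,\xi_1)$ with $\xi_0\ast\mathrm{id}_{f_0}=\xi_1\ast\mathrm{id}_{f_1}$. $\mathbb{A}$ has the two-dimensional cokernel diagram of $p$ if it has an opcomma object $b\uparrow_p b$ of $p$ along itself and a two-dimensional pushout $b\uparrow_pb\uparrow_pb$ of the span $(\delta^0,\delta^1)$, with 1-cells $D^0,D^2:b\uparrow_pb\to b\uparrow_pb\uparrow_pb$ satisfying $D^2\delta^0=D^0\delta^1$. Right Kan extension of $f:z\to y$ along $g:z\to x$: a pair $(r:x\to y,\gamma:rg\Rightarrow f)$ such that for each $k:x\to y$, $\beta\mapsto\gamma\cdot(\beta\ast\mathrm{id}_g)$ is a bijection from 2-cells $k\Rightarrow r$ to 2-cells $kg\Rightarrow f$. A 1-cell $d:y\to y'$ preserves this right Kan extension if $(dr,\mathrm{id}_d\ast\gamma)$ is a right Kan extension of $df$ along $g$. *)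

theory Defs
  imports Main
begin

text \<open>Objects, 1-cells and 2-cells are given by carrier sets.
  cmp g f is the juxtaposition g f (first f, then g);
  vcmp b a is the vertical composite b \<cdot> a (first a, then b);
  hcmp b a is the horizontal composite b \<ast> a, where a lives between
  1-cells x \<rightarrow> y and b between 1-cells y \<rightarrow> z.\<close>

record ('o, 'a, 'c) two_cat =
  ob   :: "'o set"
  ar   :: "'a set"
  src  :: "'a \<Rightarrow> 'o"
  trg  :: "'a \<Rightarrow> 'o"
  idA  :: "'o \<Rightarrow> 'a"
  cmp  :: "'a \<Rightarrow> 'a \<Rightarrow> 'a"
  cl   :: "'c set"
  dom2 :: "'c \<Rightarrow> 'a"
  cod2 :: "'c \<Rightarrow> 'a"
  id2  :: "'a \<Rightarrow> 'c"
  vcmp :: "'c \<Rightarrow> 'c \<Rightarrow> 'c"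
  hcmp :: "'c \<Rightarrow> 'c \<Rightarrow> 'c"

locale two_category =
  fixes A :: "('o, 'a, 'c) two_cat"
  assumes src_ob: "f \<in> ar A \<Longrightarrow> src A f \<in> ob A"
    and trg_ob: "f \<in> ar A \<Longrightarrow> trg A f \<in> ob A"
    and idA_ar: "x \<in> ob A \<Longrightarrow> idA A x \<in> ar A"
    and idA_src: "x \<in> ob A \<Longrightarrow> src A (idA A x) = x"
    and idA_trg: "x \<in> ob A \<Longrightarrow> trg A (idA A x) = x"
    and cmp_ar: "\<lbrakk>f \<in> ar A; g \<in> ar A; trg A f = src A g\<rbrakk> \<Longrightarrow> cmp A g f \<in> ar A"
    and cmp_src: "\<lbrakk>f \<in> ar A; g \<in> ar A; trg A f = src A g\<rbrakk> \<Longrightarrow> src A (cmp A g f) = src A f"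
    and cmp_trg: "\<lbrakk>f \<in> ar A; g \<in> ar A; trg A f = src A g\<rbrakk> \<Longrightarrow> trg A (cmp A g f) = trg A g"
    and cmp_idl: "f \<in> ar A \<Longrightarrow> cmp A (idA A (trg A f)) f = f"
    and cmp_idr: "f \<in> ar A \<Longrightarrow> cmp A f (idA A (src A f)) = f"
    and cmp_assoc: "\<lbrakk>f \<in> ar A; g \<in> ar A; h \<in> ar A; trg A f = src A g; trg A g = src A h\<rbrakk>
                    \<Longrightarrow> cmp A h (cmp A g f) = cmp A (cmp A h g) f"
    and dom2_ar: "a \<in> cl A \<Longrightarrow> dom2 A a \<in> ar A"
    and cod2_ar: "a \<in> cl A \<Longrightarrow> cod2 A a \<in> ar A"
    and cell_src: "a \<in> cl A \<Longrightarrow> src A (dom2 A a) = src A (cod2 A a)"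
    and cell_trg: "a \<in> cl A \<Longrightarrow> trg A (dom2 A a) = trg A (cod2 A a)"
    and id2_cl: "f \<in> ar A \<Longrightarrow> id2 A f \<in> cl A"
    and id2_dom: "f \<in> ar A \<Longrightarrow> dom2 A (id2 A f) = f"
    and id2_cod: "f \<in> ar A \<Longrightarrow> cod2 A (id2 A f) = f"
    and vcmp_cl: "\<lbrakk>a \<in> cl A; b \<in> cl A; cod2 A a = dom2 A b\<rbrakk> \<Longrightarrow> vcmp A b a \<in> cl A"
    and vcmp_dom: "\<lbrakk>a \<in> cl A; b \<in> cl A; cod2 A a = dom2 A b\<rbrakk> \<Longrightarrow> dom2 A (vcmp A b a) = dom2 A a"
    and vcmp_cod: "\<lbrakk>a \<in> cl A; b \<in> cl A; cod2 A a = dom2 A b\<rbrakk> \<Longrightarrow> cod2 A (vcmp A b a) = cod2 A b"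
    and vcmp_idl: "a \<in> cl A \<Longrightarrow> vcmp A (id2 A (cod2 A a)) a = a"
    and vcmp_idr: "a \<in> cl A \<Longrightarrow> vcmp A a (id2 A (dom2 A a)) = a"
    and vcmp_assoc: "\<lbrakk>a \<in> cl A; b \<in> cl A; c \<in> cl A; cod2 A a = dom2 A b; cod2 A b = dom2 A c\<rbrakk>
                     \<Longrightarrow> vcmp A c (vcmp A b a) = vcmp A (vcmp A c b) a"
    and hcmp_cl: "\<lbrakk>a \<in> cl A; b \<in> cl A; trg A (dom2 A a) = src A (dom2 A b)\<rbrakk> \<Longrightarrow> hcmp A b a \<in> cl A"
    and hcmp_dom: "\<lbrakk>a \<in> cl A; b \<in> cl A; trg A (dom2 A a) = src A (dom2 A b)\<rbrakk>
                   \<Longrightarrow> dom2 A (hcmp A b a) = cmp A (dom2 A b) (dom2 A a)"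
    and hcmp_cod: "\<lbrakk>a \<in> cl A; b \<in> cl A; trg A (dom2 A a) = src A (dom2 A b)\<rbrakk>
                   \<Longrightarrow> cod2 A (hcmp A b a) = cmp A (cod2 A b) (cod2 A a)"
    and hcmp_id2: "\<lbrakk>f \<in> ar A; g \<in> ar A; trg A f = src A g\<rbrakk>
                   \<Longrightarrow> hcmp A (id2 A g) (id2 A f) = id2 A (cmp A g f)"
    and interchange: "\<lbrakk>a \<in> cl A; a' \<in> cl A; b \<in> cl A; b' \<in> cl A;
                       cod2 A a = dom2 A a'; cod2 A b = dom2 A b'; trg A (dom2 A a) = src A (dom2 A b)\<rbrakk>
                   \<Longrightarrow> hcmp A (vcmp A b' b) (vcmp A a' a) = vcmp A (hcmp A b' a') (hcmp A b a)"
    and hcmp_idl: "a \<in> cl A \<Longrightarrow> hcmp A (id2 A (idA A (trg A (dom2 A a)))) a = a"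
    and hcmp_idr: "a \<in> cl A \<Longrightarrow> hcmp A a (id2 A (idA A (src A (dom2 A a)))) = a"
    and hcmp_assoc: "\<lbrakk>a \<in> cl A; b \<in> cl A; c \<in> cl A;
                      trg A (dom2 A a) = src A (dom2 A b); trg A (dom2 A b) = src A (dom2 A c)\<rbrakk>
                   \<Longrightarrow> hcmp A c (hcmp A b a) = hcmp A (hcmp A c b) a"

definition hom1 :: "('o, 'a, 'c) two_cat \<Rightarrow> 'o \<Rightarrow> 'o \<Rightarrow> 'a set" where
  "hom1 A x y = {f \<in> ar A. src A f = x \<and> trg A f = y}"

definition hom2 :: "('o, 'a, 'c) two_cat \<Rightarrow> 'a \<Rightarrow> 'a \<Rightarrow> 'c set" where
  "hom2 A f g = {a \<in> cl A. dom2 A a = f \<and> cod2 A a = g}"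

text \<open>The comparison functor from A(P,y) to the category of triples is an isomorphism
  of categories: bijective on objects, and bijective on each hom-set.\<close>

definition opcomma :: "('o, 'a, 'c) two_cat \<Rightarrow> 'a \<Rightarrow> 'o \<Rightarrow> 'a \<Rightarrow> 'a \<Rightarrow> 'c \<Rightarrow> bool" where
  "opcomma A p P d0 d1 al \<longleftrightarrow>
     p \<in> ar A \<and> P \<in> ob A \<and>
     d0 \<in> hom1 A (trg A p) P \<and> d1 \<in> hom1 A (trg A p) P \<and>
     al \<in> hom2 A (cmp A d1 p) (cmp A d0 p) \<and>
     (\<forall>y \<in> ob A.
        bij_betw (\<lambda>h. (cmp A h d0, cmp A h d1, hcmp A (id2 A h) al))
          (hom1 A P y)
          {(h0, h1, be). h0 \<in> hom1 A (trg A p) y \<and> h1 \<in> hom1 A (trg A p) y \<and>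
                         be \<in> hom2 A (cmp A h1 p) (cmp A h0 p)} \<and>
        (\<forall>h \<in> hom1 A P y. \<forall>h' \<in> hom1 A P y.
           bij_betw (\<lambda>xi. (hcmp A xi (id2 A d0), hcmp A xi (id2 A d1)))
             (hom2 A h h')
             {(xi0, xi1). xi0 \<in> hom2 A (cmp A h d0) (cmp A h' d0) \<and>
                          xi1 \<in> hom2 A (cmp A h d1) (cmp A h' d1) \<and>
                          vcmp A (hcmp A xi0 (id2 A p)) (hcmp A (id2 A h) al) =
                          vcmp A (hcmp A (id2 A h') al) (hcmp A xi1 (id2 A p))}))"

definition two_pushout :: "('o, 'a, 'c) two_cat \<Rightarrow> 'a \<Rightarrow> 'a \<Rightarrow> 'o \<Rightarrow> 'a \<Rightarrow> 'a \<Rightarrow> bool" where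
  "two_pushout A f0 f1 P q0 q1 \<longleftrightarrow>
     f0 \<in> ar A \<and> f1 \<in> ar A \<and> src A f0 = src A f1 \<and> P \<in> ob A \<and>
     q0 \<in> hom1 A (trg A f0) P \<and> q1 \<in> hom1 A (trg A f1) P \<and>
     cmp A q0 f0 = cmp A q1 f1 \<and>
     (\<forall>y \<in> ob A.
        bij_betw (\<lambda>k. (cmp A k q0, cmp A k q1))
          (hom1 A P y)
          {(k0, k1). k0 \<in> hom1 A (trg A f0) y \<and> k1 \<in> hom1 A (trg A f1) y \<and>
                     cmp A k0 f0 = cmp A k1 f1} \<and>
        (\<forall>k \<in> hom1 A P y. \<forall>k' \<in> hom1 A P y.
           bij_betw (\<lambda>xi. (hcmp A xi (id2 A q0), hcmp A xi (id2 A q1)))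
             (hom2 A k k')
             {(xi0, xi1). xi0 \<in> hom2 A (cmp A k q0) (cmp A k' q0) \<and>
                          xi1 \<in> hom2 A (cmp A k q1) (cmp A k' q1) \<and>
                          hcmp A xi0 (id2 A f0) = hcmp A xi1 (id2 A f1)}))"

definition right_kan :: "('o, 'a, 'c) two_cat \<Rightarrow> 'a \<Rightarrow> 'a \<Rightarrow> 'a \<Rightarrow> 'c \<Rightarrow> bool" where
  "right_kan A f g r ga \<longleftrightarrow>
     f \<in> ar A \<and> g \<in> ar A \<and> src A f = src A g \<and>
     r \<in> hom1 A (trg A g) (trg A f) \<and>
     ga \<in> hom2 A (cmp A r g) f \<and>
     (\<forall>k \<in> hom1 A (trg A g) (trg A f).
        bij_betw (\<lambda>be. vcmp A ga (hcmp A be (id2 A g))) (hom2 A k r) (hom2 A (cmp A k g) f))"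

definition preserves_right_kan ::
  "('o, 'a, 'c) two_cat \<Rightarrow> 'a \<Rightarrow> 'a \<Rightarrow> 'a \<Rightarrow> 'a \<Rightarrow> 'c \<Rightarrow> bool" where
  "preserves_right_kan A d f g r ga \<longleftrightarrow>
     d \<in> ar A \<and> src A d = trg A f \<and>
     right_kan A (cmp A d f) g (cmp A d r) (hcmp A (id2 A d) ga)"

definition adjunction :: "('o, 'a, 'c) two_cat \<Rightarrow> 'a \<Rightarrow> 'a \<Rightarrow> 'c \<Rightarrow> 'c \<Rightarrow> bool" where
  "adjunction A l u et ep \<longleftrightarrow>
     l \<in> ar A \<and> u \<in> hom1 A (trg A l) (src A l) \<and>
     et \<in> hom2 A (idA A (src A l)) (cmp A u l) \<and>
     ep \<in> hom2 A (cmp A l u) (idA A (trg A l)) \<and>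
     vcmp A (hcmp A ep (id2 A l)) (hcmp A (id2 A l) et) = id2 A l \<and>
     vcmp A (hcmp A (id2 A u) ep) (hcmp A et (id2 A u)) = id2 A u"

definition left_adjoint :: "('o, 'a, 'c) two_cat \<Rightarrow> 'a \<Rightarrow> 'a \<Rightarrow> bool" where
  "left_adjoint A l u \<longleftrightarrow> (\<exists>et ep. adjunction A l u et ep)"

end

theory Submission
  imports Defs
begin

context two_category begin

lemma cmp_idl': "f \<in> ar A \<Longrightarrow> trg A f = y \<Longrightarrow> cmp A (idA A y) f = f"
  using cmp_idl by blast
lemma cmp_idr': "f \<in> ar A \<Longrightarrow> src A f = x \<Longrightarrow> cmp A f (idA A x) = f"
  using cmp_idr by blast
lemma hcmp_idl': "a \<in> cl A \<Longrightarrow> trg A (dom2 A a) = y \<Longrightarrow> hcmp A (id2 A (idA A y)) a = a"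
  using hcmp_idl by blast
lemma hcmp_idr': "a \<in> cl A \<Longrightarrow> src A (dom2 A a) = x \<Longrightarrow> hcmp A a (id2 A (idA A x)) = a"
  using hcmp_idr by blast
lemma vcmp_idl': "a \<in> cl A \<Longrightarrow> cod2 A a = g \<Longrightarrow> vcmp A (id2 A g) a = a"
  using vcmp_idl by blast
lemma vcmp_idr': "a \<in> cl A \<Longrightarrow> dom2 A a = g \<Longrightarrow> vcmp A a (id2 A g) = a"
  using vcmp_idr by blast

lemmas tc = src_ob trg_ob idA_ar idA_src idA_trg cmp_ar cmp_src cmp_trg dom2_ar cod2_ar
  id2_cl id2_dom id2_cod vcmp_cl vcmp_dom vcmp_cod hcmp_cl hcmp_dom hcmp_cod

lemma hcmp_split1:
  assumes "a \<in> cl A" "b \<in> cl A" "trg A (dom2 A a) = src A (dom2 A b)"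
  shows "hcmp A b a = vcmp A (hcmp A b (id2 A (cod2 A a))) (hcmp A (id2 A (dom2 A b)) a)"
proof -
  have "hcmp A b a = hcmp A (vcmp A b (id2 A (dom2 A b))) (vcmp A (id2 A (cod2 A a)) a)"
    using assms by (simp add: vcmp_idl vcmp_idr)
  also have "\<dots> = vcmp A (hcmp A b (id2 A (cod2 A a))) (hcmp A (id2 A (dom2 A b)) a)"
    using assms by (intro interchange) (auto simp: tc cell_trg cell_src)
  finally show ?thesis .
qed

lemma hcmp_split2:
  assumes "a \<in> cl A" "b \<in> cl A" "trg A (dom2 A a) = src A (dom2 A b)"
  shows "hcmp A b a = vcmp A (hcmp A (id2 A (cod2 A b)) a) (hcmp A b (id2 A (dom2 A a)))"
proof -
  have "hcmp A b a = hcmp A (vcmp A (id2 A (cod2 A b)) b) (vcmp A a (id2 A (dom2 A a)))"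
    using assms by (simp add: vcmp_idl vcmp_idr)
  also have "\<dots> = vcmp A (hcmp A (id2 A (cod2 A b)) a) (hcmp A b (id2 A (dom2 A a)))"
    using assms by (intro interchange) (auto simp: tc cell_trg cell_src)
  finally show ?thesis .
qed

lemma whisk_l:
  assumes "a \<in> cl A" "b \<in> cl A" "cod2 A a = dom2 A b" "g \<in> ar A" "trg A (dom2 A a) = src A g"
  shows "hcmp A (id2 A g) (vcmp A b a) = vcmp A (hcmp A (id2 A g) b) (hcmp A (id2 A g) a)"
proof -
  have "hcmp A (id2 A g) (vcmp A b a) = hcmp A (vcmp A (id2 A g) (id2 A g)) (vcmp A b a)"
    using assms by (simp add: vcmp_idl' tc)
  also have "\<dots> = vcmp A (hcmp A (id2 A g) b) (hcmp A (id2 A g) a)"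
    using assms by (intro interchange) (auto simp: tc)
  finally show ?thesis .
qed

lemma whisk_r:
  assumes "a \<in> cl A" "b \<in> cl A" "cod2 A a = dom2 A b" "f \<in> ar A" "trg A f = src A (dom2 A a)"
  shows "hcmp A (vcmp A b a) (id2 A f) = vcmp A (hcmp A b (id2 A f)) (hcmp A a (id2 A f))"
proof -
  have "hcmp A (vcmp A b a) (id2 A f) = hcmp A (vcmp A b a) (vcmp A (id2 A f) (id2 A f))"
    using assms by (simp add: vcmp_idl' tc)
  also have "\<dots> = vcmp A (hcmp A b (id2 A f)) (hcmp A a (id2 A f))"
    using assms by (intro interchange) (auto simp: tc)
  finally show ?thesis .
qed

lemma cmp_assoc': "\<lbrakk>f \<in> ar A; g \<in> ar A; h \<in> ar A; trg A f = src A g; trg A g = src A h\<rbrakk>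
                    \<Longrightarrow> cmp A (cmp A h g) f = cmp A h (cmp A g f)"
  using cmp_assoc by simp

lemma vcmp_assoc': "\<lbrakk>a \<in> cl A; b \<in> cl A; c \<in> cl A; cod2 A a = dom2 A b; cod2 A b = dom2 A c\<rbrakk>
                     \<Longrightarrow> vcmp A (vcmp A c b) a = vcmp A c (vcmp A b a)"
  using vcmp_assoc by simp

lemma hcmp_assoc': "\<lbrakk>a \<in> cl A; b \<in> cl A; c \<in> cl A;
                      trg A (dom2 A a) = src A (dom2 A b); trg A (dom2 A b) = src A (dom2 A c)\<rbrakk>
                   \<Longrightarrow> hcmp A (hcmp A c b) a = hcmp A c (hcmp A b a)"
  using hcmp_assoc by simp

lemmas ts = tc cmp_idl' cmp_idr' cmp_assoc'

lemma adj_transpose: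
  assumes adj: "adjunction A l u et ep"
    and l: "l \<in> ar A" "src A l = P" "trg A l = B"
    and k: "k \<in> ar A" "src A k = x" "trg A k = P"
    and r: "r \<in> ar A" "src A r = x" "trg A r = B"
  shows "bij_betw (\<lambda>be. vcmp A (hcmp A ep (id2 A r)) (hcmp A (id2 A l) be))
           (hom2 A k (cmp A u r)) (hom2 A (cmp A l k) r)"
proof -
  have u: "u \<in> ar A" "src A u = B" "trg A u = P"
    using adj l by (auto simp: adjunction_def hom1_def)
  have et: "et \<in> cl A" "dom2 A et = idA A P" "cod2 A et = cmp A u l"
    and ep: "ep \<in> cl A" "dom2 A ep = cmp A l u" "cod2 A ep = idA A B"
    and tri1: "vcmp A (hcmp A ep (id2 A l)) (hcmp A (id2 A l) et) = id2 A l"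
    and tri2: "vcmp A (hcmp A (id2 A u) ep) (hcmp A et (id2 A u)) = id2 A u"
    using adj l by (auto simp: adjunction_def hom2_def)
  note T = l k r u et ep
  define F where "F = (\<lambda>be. vcmp A (hcmp A ep (id2 A r)) (hcmp A (id2 A l) be))"
  define G where "G = (\<lambda>ga. vcmp A (hcmp A (id2 A u) ga) (hcmp A et (id2 A k)))"
  have F1: "F be \<in> hom2 A (cmp A l k) r" if "be \<in> hom2 A k (cmp A u r)" for be
    using that T by (auto simp: hom2_def F_def ts)
  have G1: "G ga \<in> hom2 A k (cmp A u r)" if "ga \<in> hom2 A (cmp A l k) r" for ga
    using that T by (auto simp: hom2_def G_def ts)
  have GF: "G (F be) = be" if "be \<in> hom2 A k (cmp A u r)" for be
  proof -
    have be: "be \<in> cl A" "dom2 A be = k" "cod2 A be = cmp A u r" using that by (auto simp: hom2_def)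
    note T = T be
    have "G (F be) = vcmp A (hcmp A (id2 A u) (vcmp A (hcmp A ep (id2 A r)) (hcmp A (id2 A l) be))) (hcmp A et (id2 A k))"
      by (simp add: F_def G_def)
    also have "\<dots> = vcmp A (vcmp A (hcmp A (id2 A u) (hcmp A ep (id2 A r))) (hcmp A (id2 A u) (hcmp A (id2 A l) be))) (hcmp A et (id2 A k))"
      using T by (subst whisk_l) (auto simp: ts)
    also have "\<dots> = vcmp A (hcmp A (id2 A u) (hcmp A ep (id2 A r))) (vcmp A (hcmp A (id2 A u) (hcmp A (id2 A l) be)) (hcmp A et (id2 A k)))"
      using T by (subst vcmp_assoc') (auto simp: ts)
    also have "hcmp A (id2 A u) (hcmp A (id2 A l) be) = hcmp A (id2 A (cmp A u l)) be"
      using T hcmp_assoc[of be "id2 A l" "id2 A u"] by (auto simp: ts hcmp_id2)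
    also have "vcmp A (hcmp A (id2 A (cmp A u l)) be) (hcmp A et (id2 A k)) = hcmp A et be"
      using T hcmp_split2[of be et] by (auto simp: ts)
    also have "hcmp A et be = vcmp A (hcmp A et (id2 A (cmp A u r))) be"
      using T hcmp_split1[of be et] by (auto simp: ts hcmp_idl')
    also have "vcmp A (hcmp A (id2 A u) (hcmp A ep (id2 A r))) (vcmp A (hcmp A et (id2 A (cmp A u r))) be)
       = vcmp A (vcmp A (hcmp A (id2 A u) (hcmp A ep (id2 A r))) (hcmp A et (id2 A (cmp A u r)))) be"
      using T by (subst vcmp_assoc) (auto simp: ts)
    also have "hcmp A (id2 A u) (hcmp A ep (id2 A r)) = hcmp A (hcmp A (id2 A u) ep) (id2 A r)"
      using T by (subst hcmp_assoc) (auto simp: ts)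
    also have "hcmp A et (id2 A (cmp A u r)) = hcmp A (hcmp A et (id2 A u)) (id2 A r)"
      using T by (subst hcmp_id2[symmetric]) (auto simp: ts hcmp_assoc)
    also have "vcmp A (hcmp A (hcmp A (id2 A u) ep) (id2 A r)) (hcmp A (hcmp A et (id2 A u)) (id2 A r))
       = hcmp A (id2 A u) (id2 A r)"
      using T by (subst whisk_r[symmetric]) (auto simp: ts tri2)
    also have "vcmp A (hcmp A (id2 A u) (id2 A r)) be = be"
      using T by (simp add: hcmp_id2 vcmp_idl')
    finally show ?thesis .
  qed
  have FG: "F (G ga) = ga" if "ga \<in> hom2 A (cmp A l k) r" for ga
  proof -
    have ga: "ga \<in> cl A" "dom2 A ga = cmp A l k" "cod2 A ga = r" using that by (auto simp: hom2_def)
    note T = T ga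
    have "F (G ga) = vcmp A (hcmp A ep (id2 A r)) (hcmp A (id2 A l) (vcmp A (hcmp A (id2 A u) ga) (hcmp A et (id2 A k))))"
      by (simp add: F_def G_def)
    also have "\<dots> = vcmp A (hcmp A ep (id2 A r)) (vcmp A (hcmp A (id2 A l) (hcmp A (id2 A u) ga)) (hcmp A (id2 A l) (hcmp A et (id2 A k))))"
      using T by (subst whisk_l) (auto simp: ts)
    also have "\<dots> = vcmp A (vcmp A (hcmp A ep (id2 A r)) (hcmp A (id2 A l) (hcmp A (id2 A u) ga))) (hcmp A (id2 A l) (hcmp A et (id2 A k)))"
      using T by (subst vcmp_assoc) (auto simp: ts)
    also have "hcmp A (id2 A l) (hcmp A (id2 A u) ga) = hcmp A (id2 A (cmp A l u)) ga"
      using T by (subst hcmp_assoc) (auto simp: ts hcmp_id2)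
    also have "vcmp A (hcmp A ep (id2 A r)) (hcmp A (id2 A (cmp A l u)) ga) = hcmp A ep ga"
      using T hcmp_split1[of ga ep] by (auto simp: ts)
    also have "hcmp A ep ga = vcmp A ga (hcmp A ep (id2 A (cmp A l k)))"
      using T hcmp_split2[of ga ep] by (auto simp: ts hcmp_idl')
    also have "vcmp A (vcmp A ga (hcmp A ep (id2 A (cmp A l k)))) (hcmp A (id2 A l) (hcmp A et (id2 A k)))
       = vcmp A ga (vcmp A (hcmp A ep (id2 A (cmp A l k))) (hcmp A (id2 A l) (hcmp A et (id2 A k))))"
      using T by (subst vcmp_assoc') (auto simp: ts)
    also have "hcmp A ep (id2 A (cmp A l k)) = hcmp A (hcmp A ep (id2 A l)) (id2 A k)"
      using T by (subst hcmp_id2[symmetric]) (auto simp: ts hcmp_assoc)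
    also have "hcmp A (id2 A l) (hcmp A et (id2 A k)) = hcmp A (hcmp A (id2 A l) et) (id2 A k)"
      using T by (subst hcmp_assoc) (auto simp: ts)
    also have "vcmp A (hcmp A (hcmp A ep (id2 A l)) (id2 A k)) (hcmp A (hcmp A (id2 A l) et) (id2 A k))
       = hcmp A (id2 A l) (id2 A k)"
      using T by (subst whisk_r[symmetric]) (auto simp: ts tri1)
    also have "vcmp A ga (hcmp A (id2 A l) (id2 A k)) = ga"
      using T by (simp add: hcmp_id2 vcmp_idr')
    finally show ?thesis .
  qed
  have "bij_betw F (hom2 A k (cmp A u r)) (hom2 A (cmp A l k) r)"
    by (rule bij_betw_byWitness[where f'=G]) (use F1 G1 FG GF in auto)
  then show ?thesis by (simp add: F_def)
qed

end

theorem proposition4p2: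
  fixes A :: "('o, 'a, 'c) two_cat"
    and p :: 'a and e b P :: 'o and d0 d1 t l :: 'a and al ga :: 'c
  assumes "two_category A"
    and "p \<in> hom1 A e b"
    and "opcomma A p P d0 d1 al"
    and "\<exists>Q D0 D2. two_pushout A d0 d1 Q D2 D0"
    and "right_kan A p p t ga"
    and "l \<in> hom1 A P b"
    and "cmp A l d0 = idA A b"
    and "cmp A l d1 = t"
    and "hcmp A (id2 A l) al = ga"
  shows "(preserves_right_kan A d0 p p t ga \<longleftrightarrow> left_adjoint A l d0) \<and>
         (preserves_right_kan A d0 p p t ga \<longrightarrow>
            (\<exists>et. adjunction A l d0 et (id2 A (idA A b))))"
proof -
  interpret two_category A by fact
  have p: "p \<in> ar A" "src A p = e" "trg A p = b" using assms(2) by (auto simp: hom1_def)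
  have l: "l \<in> ar A" "src A l = P" "trg A l = b" using assms(6) by (auto simp: hom1_def)
  have oc: "P \<in> ob A" "d0 \<in> ar A" "src A d0 = b" "trg A d0 = P" "d1 \<in> ar A" "src A d1 = b" "trg A d1 = P"
     "al \<in> cl A" "dom2 A al = cmp A d1 p" "cod2 A al = cmp A d0 p"
    using assms(3) p by (auto simp: opcomma_def hom1_def hom2_def)
  have UP: "bij_betw (\<lambda>xi. (hcmp A xi (id2 A d0), hcmp A xi (id2 A d1)))
             (hom2 A h h')
             {(xi0, xi1). xi0 \<in> hom2 A (cmp A h d0) (cmp A h' d0) \<and>
                          xi1 \<in> hom2 A (cmp A h d1) (cmp A h' d1) \<and>
                          vcmp A (hcmp A xi0 (id2 A p)) (hcmp A (id2 A h) al) =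
                          vcmp A (hcmp A (id2 A h') al) (hcmp A xi1 (id2 A p))}"
    if "y \<in> ob A" "h \<in> hom1 A P y" "h' \<in> hom1 A P y" for y h h'
    using assms(3) that unfolding opcomma_def by blast
  have kan: "t \<in> ar A" "src A t = b" "trg A t = b" "ga \<in> cl A" "dom2 A ga = cmp A t p" "cod2 A ga = p"
    using assms(5) p by (auto simp: right_kan_def hom1_def hom2_def)
  have KAN: "bij_betw (\<lambda>be. vcmp A ga (hcmp A be (id2 A p))) (hom2 A k t) (hom2 A (cmp A k p) p)"
    if "k \<in> hom1 A b b" for k
    using assms(5) that p unfolding right_kan_def by auto
  note T = p l oc kan
  have ld0: "cmp A l (cmp A d0 f) = f" if "f \<in> ar A" "trg A f = b" for f
    using that T assms(7) by (metis cmp_assoc cmp_idl)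
  have A: "\<exists>et. adjunction A l d0 et (id2 A (idA A b))" if pres: "preserves_right_kan A d0 p p t ga"
  proof -
    have PK: "bij_betw (\<lambda>be. vcmp A (hcmp A (id2 A d0) ga) (hcmp A be (id2 A p))) (hom2 A k (cmp A d0 t)) (hom2 A (cmp A k p) (cmp A d0 p))"
      if "k \<in> hom1 A b P" for k
      using pres that T unfolding preserves_right_kan_def right_kan_def by (auto simp: ts)
    have "al \<in> hom2 A (cmp A d1 p) (cmp A d0 p)" using T by (auto simp: hom2_def)
    then obtain be where be: "be \<in> hom2 A d1 (cmp A d0 t)"
       and beq: "vcmp A (hcmp A (id2 A d0) ga) (hcmp A be (id2 A p)) = al"
      using PK[of d1] T unfolding bij_betw_def by (force simp: hom1_def)
    have be': "be \<in> cl A" "dom2 A be = d1" "cod2 A be = cmp A d0 t" using be by (auto simp: hom2_def)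
    note T = T be'
    have hP: "idA A P \<in> hom1 A P P" "cmp A d0 l \<in> hom1 A P P" using T by (auto simp: hom1_def ts)
    have "(id2 A d0, be) \<in> {(xi0, xi1). xi0 \<in> hom2 A (cmp A (idA A P) d0) (cmp A (cmp A d0 l) d0) \<and>
                          xi1 \<in> hom2 A (cmp A (idA A P) d1) (cmp A (cmp A d0 l) d1) \<and>
                          vcmp A (hcmp A xi0 (id2 A p)) (hcmp A (id2 A (idA A P)) al) =
                          vcmp A (hcmp A (id2 A (cmp A d0 l)) al) (hcmp A xi1 (id2 A p))}"
    proof -
      have "vcmp A (hcmp A (id2 A d0) (id2 A p)) (hcmp A (id2 A (idA A P)) al) = al"
        using T by (simp add: hcmp_id2 hcmp_idl' vcmp_idl' ts)
      moreover have "hcmp A (id2 A (cmp A d0 l)) al = hcmp A (id2 A d0) ga"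
        using T assms(9) hcmp_assoc[of al "id2 A l" "id2 A d0"] by (auto simp: ts hcmp_id2)
      ultimately show ?thesis using T beq assms(7,8) by (auto simp: hom2_def ts ld0)
    qed
    then obtain et where et: "et \<in> hom2 A (idA A P) (cmp A d0 l)"
      and et0: "hcmp A et (id2 A d0) = id2 A d0" and et1: "hcmp A et (id2 A d1) = be"
      using UP[OF oc(1) hP] unfolding bij_betw_def by (smt (verit, ccfv_threshold) imageE prod.inject)
    have et': "et \<in> cl A" "dom2 A et = idA A P" "cod2 A et = cmp A d0 l" using et by (auto simp: hom2_def)
    note T = T et'
    have lbe: "hcmp A (id2 A l) be = id2 A t"
    proof -
      have inj: "inj_on (\<lambda>be. vcmp A ga (hcmp A be (id2 A p))) (hom2 A t t)"
        using KAN[of t] T by (auto simp: bij_betw_def hom1_def)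
      have m1: "hcmp A (id2 A l) be \<in> hom2 A t t" using T assms(7,8) by (auto simp: hom2_def ts ld0)
      have m2: "id2 A t \<in> hom2 A t t" using T by (auto simp: hom2_def ts)
      have "ga = hcmp A (id2 A l) (hcmp A (id2 A d0) ga)"
        using T assms(7) hcmp_assoc[of ga "id2 A d0" "id2 A l"] by (auto simp: ts hcmp_id2 hcmp_idl')
      then have "vcmp A ga (hcmp A (hcmp A (id2 A l) be) (id2 A p))
          = vcmp A (hcmp A (id2 A l) (hcmp A (id2 A d0) ga)) (hcmp A (id2 A l) (hcmp A be (id2 A p)))"
        using T hcmp_assoc[of "id2 A p" be "id2 A l"] by (auto simp: ts)
      also have "\<dots> = hcmp A (id2 A l) al"
        using T beq whisk_l[of "hcmp A be (id2 A p)" "hcmp A (id2 A d0) ga" l] by (auto simp: ts)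
      also have "\<dots> = vcmp A ga (hcmp A (id2 A t) (id2 A p))"
        using T assms(9) by (simp add: hcmp_id2 vcmp_idr' ts)
      finally show ?thesis using inj m1 m2 by (auto simp: inj_on_def)
    qed
    have tri1: "hcmp A (id2 A l) et = id2 A l"
    proof -
      have inj: "inj_on (\<lambda>xi. (hcmp A xi (id2 A d0), hcmp A xi (id2 A d1))) (hom2 A l l)"
        using UP[of b l l] T trg_ob[OF p(1)] by (auto simp: bij_betw_def hom1_def)
      have m1: "hcmp A (id2 A l) et \<in> hom2 A l l" using T assms(7,8) by (auto simp: hom2_def ts ld0)
      have m2: "id2 A l \<in> hom2 A l l" using T by (auto simp: hom2_def ts)
      have "hcmp A (hcmp A (id2 A l) et) (id2 A d0) = id2 A (cmp A l d0)"
        using T et0 hcmp_assoc[of "id2 A d0" et "id2 A l"] by (auto simp: ts hcmp_id2)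
      moreover have "hcmp A (hcmp A (id2 A l) et) (id2 A d1) = id2 A (cmp A l d1)"
        using T et1 lbe assms(8) hcmp_assoc[of "id2 A d1" et "id2 A l"] by (auto simp: ts hcmp_id2)
      ultimately show ?thesis using inj m1 m2 T by (auto simp: inj_on_def hcmp_id2)
    qed
    have "adjunction A l d0 et (id2 A (idA A b))"
      unfolding adjunction_def using T tri1 et0 assms(7)
      by (auto simp: hom1_def hom2_def ts hcmp_id2 vcmp_idl')
    then show ?thesis by blast
  qed
  have B: "preserves_right_kan A d0 p p t ga" if la: "left_adjoint A l d0"
  proof -
    obtain et ep where adj: "adjunction A l d0 et ep" using la by (auto simp: left_adjoint_def)
    have ep: "ep \<in> cl A" "dom2 A ep = cmp A l d0" "cod2 A ep = idA A b"
      using adj l by (auto simp: adjunction_def hom2_def)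
    note T = T ep
    have "bij_betw (\<lambda>be. vcmp A (hcmp A (id2 A d0) ga) (hcmp A be (id2 A p))) (hom2 A k (cmp A d0 t)) (hom2 A (cmp A k p) (cmp A d0 p))"
      if k: "k \<in> ar A" "src A k = b" "trg A k = P" for k
    proof -
      note T = T k
      define Phi where "Phi = (\<lambda>be. vcmp A (hcmp A (id2 A d0) ga) (hcmp A be (id2 A p)))"
      define F1 where "F1 = (\<lambda>be. vcmp A (hcmp A ep (id2 A t)) (hcmp A (id2 A l) be))"
      define F2 where "F2 = (\<lambda>be. vcmp A (hcmp A ep (id2 A p)) (hcmp A (id2 A l) be))"
      define Psi where "Psi = (\<lambda>be. vcmp A ga (hcmp A be (id2 A p)))"
      have b1: "bij_betw F1 (hom2 A k (cmp A d0 t)) (hom2 A (cmp A l k) t)"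
        unfolding F1_def by (rule adj_transpose[OF adj]) (use T in auto)
      have b2: "bij_betw F2 (hom2 A (cmp A k p) (cmp A d0 p)) (hom2 A (cmp A l (cmp A k p)) p)"
        unfolding F2_def by (rule adj_transpose[OF adj]) (use T in \<open>auto simp: ts\<close>)
      have b3: "bij_betw Psi (hom2 A (cmp A l k) t) (hom2 A (cmp A l (cmp A k p)) p)"
        using KAN[of "cmp A l k"] T unfolding Psi_def by (auto simp: hom1_def ts)
      have img: "Phi ` hom2 A k (cmp A d0 t) \<subseteq> hom2 A (cmp A k p) (cmp A d0 p)"
        using T by (auto simp: Phi_def hom2_def ts)
      have key: "F2 (Phi be) = Psi (F1 be)" if "be \<in> hom2 A k (cmp A d0 t)" for be
      proof -
        have be: "be \<in> cl A" "dom2 A be = k" "cod2 A be = cmp A d0 t" using that by (auto simp: hom2_def)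
        note T = T be
        have "F2 (Phi be) = vcmp A (hcmp A ep (id2 A p)) (hcmp A (id2 A l) (vcmp A (hcmp A (id2 A d0) ga) (hcmp A be (id2 A p))))"
          by (simp add: F2_def Phi_def)
        also have "\<dots> = vcmp A (hcmp A ep (id2 A p)) (vcmp A (hcmp A (id2 A l) (hcmp A (id2 A d0) ga)) (hcmp A (id2 A l) (hcmp A be (id2 A p))))"
          using T by (subst whisk_l) (auto simp: ts)
        also have "\<dots> = vcmp A (vcmp A (hcmp A ep (id2 A p)) (hcmp A (id2 A l) (hcmp A (id2 A d0) ga))) (hcmp A (id2 A l) (hcmp A be (id2 A p)))"
          using T by (subst vcmp_assoc) (auto simp: ts)
        also have "hcmp A (id2 A l) (hcmp A (id2 A d0) ga) = hcmp A (id2 A (cmp A l d0)) ga"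
          using T hcmp_assoc[of ga "id2 A d0" "id2 A l"] by (auto simp: ts hcmp_id2)
        also have "vcmp A (hcmp A ep (id2 A p)) (hcmp A (id2 A (cmp A l d0)) ga) = hcmp A ep ga"
          using T hcmp_split1[of ga ep] by (auto simp: ts)
        also have "hcmp A ep ga = vcmp A ga (hcmp A ep (id2 A (cmp A t p)))"
          using T hcmp_split2[of ga ep] by (auto simp: ts hcmp_idl')
        also have "vcmp A (vcmp A ga (hcmp A ep (id2 A (cmp A t p)))) (hcmp A (id2 A l) (hcmp A be (id2 A p)))
            = vcmp A ga (vcmp A (hcmp A ep (id2 A (cmp A t p))) (hcmp A (id2 A l) (hcmp A be (id2 A p))))"
          using T by (subst vcmp_assoc') (auto simp: ts)
        also have "hcmp A ep (id2 A (cmp A t p)) = hcmp A (hcmp A ep (id2 A t)) (id2 A p)"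
          using T by (subst hcmp_id2[symmetric]) (auto simp: ts hcmp_assoc)
        also have "hcmp A (id2 A l) (hcmp A be (id2 A p)) = hcmp A (hcmp A (id2 A l) be) (id2 A p)"
          using T by (subst hcmp_assoc) (auto simp: ts)
        also have "vcmp A (hcmp A (hcmp A ep (id2 A t)) (id2 A p)) (hcmp A (hcmp A (id2 A l) be) (id2 A p))
           = hcmp A (F1 be) (id2 A p)"
          unfolding F1_def using T by (subst whisk_r) (auto simp: ts)
        finally show ?thesis by (simp add: Psi_def)
      qed
      have "bij_betw (F2 \<circ> Phi) (hom2 A k (cmp A d0 t)) (hom2 A (cmp A l (cmp A k p)) p)"
      proof -
        have "bij_betw (Psi \<circ> F1) (hom2 A k (cmp A d0 t)) (hom2 A (cmp A l (cmp A k p)) p)"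
          using b1 b3 by (rule bij_betw_trans)
        then show ?thesis by (rule bij_betw_cong[THEN iffD1, rotated]) (simp add: key)
      qed
      then have "bij_betw Phi (hom2 A k (cmp A d0 t)) (hom2 A (cmp A k p) (cmp A d0 p))"
        using bij_betw_comp_iff2[OF b2 img] by simp
      then show ?thesis by (simp add: Phi_def)
    qed
    then show ?thesis
      unfolding preserves_right_kan_def right_kan_def using T
      by (auto simp: hom1_def hom2_def ts)
  qed
  show ?thesis using A B by (auto simp: left_adjoint_def)
qed

end
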